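(* Let $(k_n)$ be a sequence of positive integers with $2^{k_n}/n\to\infty$. Then, under the conditional distribution given $X_n^*=2^{k_n}$, \[ \frac{S_n}{X_n^*}-\frac{n k_n}{2^{k_n}}\xrightarrow{\ \mathbb{P}\ }1 , \] i.e. for every $\varepsilon>0$, $\mathbb{P}\big\{\big|\frac{S_n}{X_n^*}-\frac{nk_n}{2^{k_n}}-1\big|>\varepsilon\ \big|\ X_n^*=2^{k_n}\big\}\to0$.
   Context: $X_1,X_2,\ldots$ are iid with $\mathbb{P}\{X_i=2^k\}=2^{-k}$, $k\in\{1,2,\ldots\}$; $S_n=\sum_{i\le n}X_i$, $X_n^*=\max_{i\le n}X_i$. *)

theory Defs
  imports "HOL-Probability.Probability"
begin

definition S :: "(nat \<Rightarrow> 'a \<Rightarrow> real) \<Rightarrow> nat \<Rightarrow> 'a \<Rightarrow> real" where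
  "S X n \<omega> = (\<Sum>i\<in>{1..n}. X i \<omega>)"

definition Xmax :: "(nat \<Rightarrow> 'a \<Rightarrow> real) \<Rightarrow> nat \<Rightarrow> 'a \<Rightarrow> real" where
  "Xmax X n \<omega> = Max ((\<lambda>i. X i \<omega>) ` {1..n})"

end

theory Submission
  imports Defs "HOL-Real_Asymp.Real_Asymp"
begin


lemma abs_aux: "(e::real) < \<bar>T - a\<bar> \<Longrightarrow> 0 \<le> a \<Longrightarrow> a \<le> e/2 \<Longrightarrow> e/2 < \<bar>T\<bar>"
  by (cases "T \<ge> 0"; cases "T - a \<ge> 0") auto

definition wf :: "nat \<Rightarrow> real \<Rightarrow> real" where
  "wf k x = (indicator {0<..(2::real)^k} x * x - real k) / 2^k"

lemma wf_meas[measurable]: "wf k \<in> borel_measurable borel"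
  unfolding wf_def by measurable

lemma wf_bound: "\<bar>wf k x\<bar> \<le> 1 + real k"
proof -
  have m: "(1::real) \<le> 2^k" by simp
  have h: "\<bar>indicator {0<..(2::real)^k} x * x\<bar> \<le> 2^k" by (auto simp: indicator_def)
  have "\<bar>indicator {0<..(2::real)^k} x * x - real k\<bar> \<le> 2^k + real k" using h by linarith
  also have "\<dots> \<le> (1 + real k) * 2^k"
  proof -
    have "real k * 1 \<le> real k * 2^k" using m by (intro mult_left_mono) auto
    then show ?thesis by (simp add: algebra_simps)
  qed
  finally show ?thesis unfolding wf_def using m by (simp add: abs_divide divide_le_eq)
qed

lemma sum_pow2: "(\<Sum>l\<in>{1..k}. (2::real)^l) \<le> 2 * 2^k"
  by (induction k) (simp_all add: sum.cl_ivl_Suc)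

lemma geo_half: "k \<ge> 1 \<Longrightarrow> (\<Sum>l\<in>{1..<k}. 1 / (2::real)^l) = 1 - 2 / 2^k"
proof (induction k)
  case 0 then show ?case by simp
next
  case (Suc k)
  show ?case
  proof (cases "k = 0")
    case True then show ?thesis by simp
  next
    case False
    then have "(\<Sum>l\<in>{1..<Suc k}. 1 / (2::real)^l) = (\<Sum>l\<in>{1..<k}. 1 / (2::real)^l) + 1/2^k"
      by (simp add: atLeastLessThanSuc)
    also have "\<dots> = 1 - 2 / 2^Suc k" using Suc False by (simp add: field_simps)
    finally show ?thesis .
  qed
qed


locale P3 = prob_space M for M :: "'a measure" +
  fixes X :: "nat \<Rightarrow> 'a \<Rightarrow> real"
  assumes rv: "\<And>i. i \<ge> 1 \<Longrightarrow> X i \<in> borel_measurable M"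
    and indep: "indep_vars (\<lambda>_. borel) X {1..}"
    and distr: "\<And>i j. i \<ge> 1 \<Longrightarrow> j \<ge> 1 \<Longrightarrow>
                  measure M {\<omega> \<in> space M. X i \<omega> = 2 ^ j} = 1 / 2 ^ j"
begin

lemma prod_int:
  fixes g :: "nat \<Rightarrow> real \<Rightarrow> real" and B :: "nat \<Rightarrow> real"
  assumes "finite I" "I \<subseteq> {1..}" "\<And>t. t \<in> I \<Longrightarrow> g t \<in> borel_measurable borel"
    "\<And>t x. t \<in> I \<Longrightarrow> \<bar>g t x\<bar> \<le> B t"
  shows "expectation (\<lambda>\<omega>. \<Prod>t\<in>I. g t (X t \<omega>)) = (\<Prod>t\<in>I. expectation (\<lambda>\<omega>. g t (X t \<omega>)))"
    and "integrable M (\<lambda>\<omega>. \<Prod>t\<in>I. g t (X t \<omega>))"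
proof -
  have ind: "indep_vars (\<lambda>_. borel) (\<lambda>t \<omega>. g t (X t \<omega>)) I"
    by (rule indep_vars_compose2[OF indep_vars_subset[OF indep assms(2)]]) (use assms(3) in auto)
  have int: "integrable M (\<lambda>\<omega>. g t (X t \<omega>))" if "t \<in> I" for t
  proof (rule integrable_const_bound[where B="B t"])
    show "AE x in M. norm (g t (X t x)) \<le> B t" using assms(4) that by auto
    show "(\<lambda>\<omega>. g t (X t \<omega>)) \<in> borel_measurable M"
      using assms(2,3) that rv by (auto intro: measurable_compose)
  qed
  show "expectation (\<lambda>\<omega>. \<Prod>t\<in>I. g t (X t \<omega>)) = (\<Prod>t\<in>I. expectation (\<lambda>\<omega>. g t (X t \<omega>)))"
    by (rule indep_vars_lebesgue_integral[OF assms(1) ind int])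
  show "integrable M (\<lambda>\<omega>. \<Prod>t\<in>I. g t (X t \<omega>))"
    by (rule indep_vars_integrable[OF assms(1) ind int])
qed

lemma int_ind:
  assumes "i \<ge> 1"
  shows "expectation (\<lambda>\<omega>. indicator {c} (X i \<omega>)) = prob {\<omega> \<in> space M. X i \<omega> = c}"
proof -
  have "expectation (\<lambda>\<omega>. indicator {c} (X i \<omega>)) = expectation (indicator {\<omega> \<in> space M. X i \<omega> = c})"
    by (rule Bochner_Integration.integral_cong) (auto simp: indicator_def)
  also have "\<dots> = prob {\<omega> \<in> space M. X i \<omega> = c}" by (simp add: Int_absorb2)
  finally show ?thesis .
qed

lemma AE_pow:
  assumes "i \<ge> 1"
  shows "AE \<omega> in M. \<exists>l\<ge>1. X i \<omega> = 2 ^ l"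
proof -
  define A where "A l = {\<omega> \<in> space M. X i \<omega> = 2 ^ Suc l}" for l
  have meas: "range A \<subseteq> sets M" unfolding A_def using rv[OF assms] by auto
  have disj: "disjoint_family A" unfolding A_def disjoint_family_on_def by auto
  have "(\<lambda>l. prob (A l)) sums prob (\<Union>l. A l)" by (rule finite_measure_UNION[OF meas disj])
  moreover have "(\<lambda>l. prob (A l)) = (\<lambda>l. (1/2::real)^Suc l)"
    unfolding A_def by (subst distr[OF assms]) (auto simp: power_one_over)
  ultimately have "prob (\<Union>l. A l) = 1" using power_half_series sums_unique2 by metis
  then have "AE \<omega> in M. \<omega> \<in> (\<Union>l. A l)" by (rule AE_prob_1)
  then show ?thesis
    by eventually_elim (auto simp: A_def intro: exI[of _ "Suc _"])
qed

lemma phi_point: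
  fixes \<phi> :: "real \<Rightarrow> real"
  assumes "j \<ge> 1"
  shows "\<phi> (indicator {0<..(2::real)^k} (2^j) * 2^j) = \<phi> 0 + (\<Sum>l\<in>{1..k}. (\<phi> (2^l) - \<phi> 0) * indicator {2^l} ((2::real)^j))"
proof -
  have "(\<Sum>l\<in>{1..k}. (\<phi> (2^l) - \<phi> 0) * indicator {2^l} ((2::real)^j)) = (\<Sum>l\<in>{1..k}. if l = j then \<phi> (2^l) - \<phi> 0 else 0)"
    by (rule sum.cong) (auto simp: indicator_def)
  also have "\<dots> = (if j \<in> {1..k} then \<phi> (2^j) - \<phi> 0 else 0)" by simp
  finally have e: "(\<Sum>l\<in>{1..k}. (\<phi> (2^l) - \<phi> 0) * indicator {2^l} ((2::real)^j)) = (if j \<in> {1..k} then \<phi> (2^j) - \<phi> 0 else 0)" .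
  show ?thesis
  proof (cases "j \<le> k")
    case True
    then have "(2::real)^j \<le> 2^k" by simp
    then show ?thesis using e True assms by (simp add: indicator_def)
  next
    case False
    then have "\<not> (2::real)^j \<le> 2^k" by simp
    then show ?thesis using e False assms by (simp add: indicator_def)
  qed
qed

lemma exp_phi:
  fixes \<phi> :: "real \<Rightarrow> real"
  assumes "i \<ge> 1" "\<phi> \<in> borel_measurable borel"
  shows "expectation (\<lambda>\<omega>. \<phi> (indicator {0<..(2::real)^k} (X i \<omega>) * X i \<omega>)) = \<phi> 0 + (\<Sum>l\<in>{1..k}. (\<phi> (2^l) - \<phi> 0) / 2^l)"
proof -
  have "expectation (\<lambda>\<omega>. \<phi> (indicator {0<..(2::real)^k} (X i \<omega>) * X i \<omega>)) =
     expectation (\<lambda>\<omega>. \<phi> 0 + (\<Sum>l\<in>{1..k}. (\<phi> (2^l) - \<phi> 0) * indicator {2^l} (X i \<omega>)))"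
  proof (rule integral_cong_AE)
    show "(\<lambda>\<omega>. \<phi> (indicator {0<..(2::real)^k} (X i \<omega>) * X i \<omega>)) \<in> borel_measurable M"
      using rv[OF assms(1)] assms(2) by measurable
    show "(\<lambda>\<omega>. \<phi> 0 + (\<Sum>l\<in>{1..k}. (\<phi> (2^l) - \<phi> 0) * indicator {2^l} (X i \<omega>))) \<in> borel_measurable M"
      using rv[OF assms(1)] by measurable
    show "AE \<omega> in M. \<phi> (indicator {0<..(2::real)^k} (X i \<omega>) * X i \<omega>) = \<phi> 0 + (\<Sum>l\<in>{1..k}. (\<phi> (2^l) - \<phi> 0) * indicator {2^l} (X i \<omega>))"
      using AE_pow[OF assms(1)] by eventually_elim (auto simp: phi_point)
  qed
  also have "\<dots> = \<phi> 0 + (\<Sum>l\<in>{1..k}. (\<phi> (2^l) - \<phi> 0) * expectation (\<lambda>\<omega>. indicator {2^l} (X i \<omega>)))"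
  proof -
    have ii: "integrable M (\<lambda>\<omega>. indicat_real {2^l} (X i \<omega>))" for l :: nat
      by (rule integrable_const_bound[where B=1]) (use rv[OF assms(1)] in \<open>auto simp: indicator_def\<close>)
    have isum: "integrable M (\<lambda>\<omega>. \<Sum>l\<in>{1..k}. (\<phi> (2^l) - \<phi> 0) * indicator {2^l} (X i \<omega>))"
      by (intro Bochner_Integration.integrable_sum Bochner_Integration.integrable_mult_right ii)
    show ?thesis
      apply (subst Bochner_Integration.integral_add[OF _ isum])
       apply simp
      apply (subst Bochner_Integration.integral_sum)
       apply (intro Bochner_Integration.integrable_mult_right ii)
      apply (simp add: prob_space)
      done
  qed
  also have "\<dots> = \<phi> 0 + (\<Sum>l\<in>{1..k}. (\<phi> (2^l) - \<phi> 0) / 2^l)"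
    by (intro arg_cong2[where f="(+)"] refl sum.cong) (auto simp: int_ind[OF assms(1)] distr[OF assms(1)])
  finally show ?thesis .
qed

lemma exp_w: "i \<ge> 1 \<Longrightarrow> expectation (\<lambda>\<omega>. wf k (X i \<omega>)) = 0"
proof -
  assume i: "i \<ge> 1"
  have "expectation (\<lambda>\<omega>. wf k (X i \<omega>)) = expectation (\<lambda>\<omega>. (\<lambda>y. (y - real k) / 2^k) (indicator {0<..(2::real)^k} (X i \<omega>) * X i \<omega>))"
    by (simp add: wf_def)
  also have "\<dots> = (0 - real k) / 2^k + (\<Sum>l\<in>{1..k}. ((2^l - real k) / 2^k - (0 - real k) / 2^k) / 2^l)"
    by (rule exp_phi[OF i]) measurable
  also have "\<dots> = (0 - real k) / 2^k + (\<Sum>l\<in>{1..k}. 1 / 2^k)"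
    by (intro arg_cong2[where f="(+)"] refl sum.cong) (auto simp: field_simps)
  also have "\<dots> = 0" by simp
  finally show ?thesis .
qed

lemma exp_w2: "i \<ge> 1 \<Longrightarrow> expectation (\<lambda>\<omega>. (wf k (X i \<omega>))^2) \<le> 2 / 2^k"
proof -
  assume i: "i \<ge> 1"
  have "expectation (\<lambda>\<omega>. (wf k (X i \<omega>))^2) = expectation (\<lambda>\<omega>. (\<lambda>y. ((y - real k) / 2^k)^2) (indicator {0<..(2::real)^k} (X i \<omega>) * X i \<omega>))"
    by (simp add: wf_def)
  also have "\<dots> = ((0 - real k) / 2^k)^2 + (\<Sum>l\<in>{1..k}. (((2^l - real k) / 2^k)^2 - ((0 - real k) / 2^k)^2) / 2^l)"
    by (rule exp_phi[OF i]) measurable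
  also have "\<dots> = ((0 - real k) / 2^k)^2 + (\<Sum>l\<in>{1..k}. (2^l - 2 * real k) / (2^k)^2)"
    by (intro arg_cong2[where f="(+)"] refl sum.cong) (auto simp: field_simps power2_eq_square)
  also have "\<dots> = (real k ^2 + (\<Sum>l\<in>{1..k}. 2^l) - 2 * real k * real k) / (2^k)^2"
    by (simp add: sum_divide_distrib[symmetric] sum_subtractf power2_eq_square add_divide_distrib diff_divide_distrib)
  also have "\<dots> \<le> (2 * 2^k) / (2^k)^2"
  proof -
    have "0 \<le> real k * real k" by simp
    then have "real k ^2 + (\<Sum>l\<in>{1..k}. 2^l) - 2 * real k * real k \<le> 2 * 2^k"
      using sum_pow2[of k] unfolding power2_eq_square by linarith
    then show ?thesis by (intro divide_right_mono) auto
  qed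
  also have "\<dots> = 2 / 2^k" by (simp add: power2_eq_square)
  finally show ?thesis .
qed

lemma prob_less: "i \<ge> 1 \<Longrightarrow> k \<ge> 1 \<Longrightarrow> expectation (\<lambda>\<omega>. indicator {..<(2::real)^k} (X i \<omega>)) \<ge> 1 - 2 / (2::real)^k"
proof -
  assume i: "i \<ge> 1" and k: "k \<ge> 1"
  have pt: "(\<Sum>l\<in>{1..<k}. indicator {(2::real)^l} x) \<le> (indicator {..<(2::real)^k} x :: real)" for x :: real
  proof (cases "\<exists>j\<in>{1..<k}. x = 2^j")
    case True
    then obtain j where j: "j \<in> {1..<k}" "x = 2^j" by auto
    have "(\<Sum>l\<in>{1..<k}. indicator {(2::real)^l} x) = (\<Sum>l\<in>{1..<k}. if l = j then 1 else 0::real)"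
      using j by (intro sum.cong) (auto simp: indicator_def)
    also have "\<dots> = 1" using j(1) by simp
    finally have e: "(\<Sum>l\<in>{1..<k}. indicator {(2::real)^l} x) = (1::real)" .
    have "indicator {..<(2::real)^k} x = (1::real)" using j by (simp add: indicator_def)
    then show ?thesis using e by linarith
  next
    case False
    then have "(\<Sum>l\<in>{1..<k}. indicator {(2::real)^l} x) = (0::real)"
      by (intro sum.neutral) (auto simp: indicator_def)
    then show ?thesis by (simp add: indicator_def)
  qed
  have ii: "integrable M (\<lambda>\<omega>. indicat_real A (X i \<omega>))" if "A \<in> sets borel" for A
    by (rule integrable_const_bound[where B=1]) (use rv[OF i] that in \<open>auto simp: indicator_def\<close>)
  have "1 - 2 / 2^k = (\<Sum>l\<in>{1..<k}. 1 / (2::real)^l)" using geo_half[OF k] by simp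
  also have "\<dots> = (\<Sum>l\<in>{1..<k}. expectation (\<lambda>\<omega>. indicator {(2::real)^l} (X i \<omega>)))"
    by (intro sum.cong) (auto simp: int_ind[OF i] distr[OF i])
  also have "\<dots> = expectation (\<lambda>\<omega>. \<Sum>l\<in>{1..<k}. indicator {(2::real)^l} (X i \<omega>))"
    by (rule Bochner_Integration.integral_sum[symmetric]) (auto intro: ii)
  also have "\<dots> \<le> expectation (\<lambda>\<omega>. indicator {..<(2::real)^k} (X i \<omega>))"
    by (intro integral_mono pt ii Bochner_Integration.integrable_sum) auto
  finally show ?thesis .
qed

lemma prob_eq: "i \<ge> 1 \<Longrightarrow> k \<ge> 1 \<Longrightarrow> expectation (\<lambda>\<omega>. indicator {(2::real)^k} (X i \<omega>)) = 1 / (2::real)^k"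
  by (simp add: int_ind distr)

lemma ind_bound: "\<bar>indicator A x :: real\<bar> \<le> 1 + real k"
  by (auto simp: indicator_def)

lemma trip:
  assumes "i \<ge> 1" "j \<ge> 1" "l \<ge> 1" "i \<noteq> j" "i \<noteq> l" "j \<noteq> l"
  shows "integrable M (\<lambda>\<omega>. indicator {(2::real)^k} (X i \<omega>) * (wf k (X j \<omega>) * wf k (X l \<omega>)))"
    and "expectation (\<lambda>\<omega>. indicator {(2::real)^k} (X i \<omega>) * (wf k (X j \<omega>) * wf k (X l \<omega>))) = 0"
proof -
  define g where "g t = (if t = i then indicator {(2::real)^k} else wf k)" for t
  have p: "(\<Prod>t\<in>{i,j,l}. g t (X t \<omega>)) = indicator {(2::real)^k} (X i \<omega>) * (wf k (X j \<omega>) * wf k (X l \<omega>))" for \<omega>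
    using assms by (simp add: g_def)
  have fin: "finite {i,j,l}" "{i,j,l} \<subseteq> {1..}" using assms by auto
  have gm: "\<And>t. t \<in> {i,j,l} \<Longrightarrow> g t \<in> borel_measurable borel" by (auto simp: g_def)
  have gb: "\<And>t x. t \<in> {i,j,l} \<Longrightarrow> \<bar>g t x\<bar> \<le> 1 + real k" by (auto simp: g_def wf_bound indicator_def)
  show "integrable M (\<lambda>\<omega>. indicator {(2::real)^k} (X i \<omega>) * (wf k (X j \<omega>) * wf k (X l \<omega>)))"
  proof -
    have "integrable M (\<lambda>\<omega>. \<Prod>t\<in>{i,j,l}. g t (X t \<omega>))" by (rule prod_int(2)[OF fin gm gb])
    then show ?thesis by (simp only: p)
  qed
  have "expectation (\<lambda>\<omega>. indicator {(2::real)^k} (X i \<omega>) * (wf k (X j \<omega>) * wf k (X l \<omega>)))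
     = (\<Prod>t\<in>{i,j,l}. expectation (\<lambda>\<omega>. g t (X t \<omega>)))"
    unfolding p[symmetric] by (rule prod_int(1)[OF fin gm gb])
  also have "\<dots> = 0" using assms by (simp add: g_def exp_w)
  finally show "expectation (\<lambda>\<omega>. indicator {(2::real)^k} (X i \<omega>) * (wf k (X j \<omega>) * wf k (X l \<omega>))) = 0" .
qed

lemma doub:
  assumes "i \<ge> 1" "j \<ge> 1" "i \<noteq> j" and kk: "k \<ge> 1"
  shows "integrable M (\<lambda>\<omega>. indicator {(2::real)^k} (X i \<omega>) * (wf k (X j \<omega>) * wf k (X j \<omega>)))"
    and "expectation (\<lambda>\<omega>. indicator {(2::real)^k} (X i \<omega>) * (wf k (X j \<omega>) * wf k (X j \<omega>))) \<le> 2 / ((2::real)^k)^2"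
proof -
  define g where "g t = (if t = i then indicator {(2::real)^k} else (\<lambda>x. wf k x * wf k x))" for t
  have p: "(\<Prod>t\<in>{i,j}. g t (X t \<omega>)) = indicator {(2::real)^k} (X i \<omega>) * (wf k (X j \<omega>) * wf k (X j \<omega>))" for \<omega>
    using assms by (simp add: g_def)
  have fin: "finite {i,j}" "{i,j} \<subseteq> {1..}" using assms by auto
  have gm: "\<And>t. t \<in> {i,j} \<Longrightarrow> g t \<in> borel_measurable borel" by (auto simp: g_def)
  have wb: "\<bar>wf k x * wf k x\<bar> \<le> (1 + real k) * (1 + real k)" for x
    unfolding abs_mult by (intro mult_mono wf_bound) auto
  have gb: "\<And>t x. t \<in> {i,j} \<Longrightarrow> \<bar>g t x\<bar> \<le> (1 + real k) * (1 + real k)"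
  proof -
    have "(1::real) * 1 \<le> (1 + real k) * (1 + real k)" by (intro mult_mono) auto
    then show "\<And>t x. t \<in> {i,j} \<Longrightarrow> \<bar>g t x\<bar> \<le> (1 + real k) * (1 + real k)"
      using wb by (auto simp: g_def indicator_def)
  qed
  show "integrable M (\<lambda>\<omega>. indicator {(2::real)^k} (X i \<omega>) * (wf k (X j \<omega>) * wf k (X j \<omega>)))"
  proof -
    have "integrable M (\<lambda>\<omega>. \<Prod>t\<in>{i,j}. g t (X t \<omega>))" by (rule prod_int(2)[OF fin gm gb])
    then show ?thesis by (simp only: p)
  qed
  have "expectation (\<lambda>\<omega>. indicator {(2::real)^k} (X i \<omega>) * (wf k (X j \<omega>) * wf k (X j \<omega>)))
     = (\<Prod>t\<in>{i,j}. expectation (\<lambda>\<omega>. g t (X t \<omega>)))"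
    unfolding p[symmetric] by (rule prod_int(1)[OF fin gm gb])
  also have "\<dots> = (1 / 2^k) * expectation (\<lambda>\<omega>. (wf k (X j \<omega>))^2)"
    using assms by (simp add: g_def int_ind distr[OF assms(1) kk] power2_eq_square)
  also have "\<dots> \<le> (1 / 2^k) * (2 / 2^k)"
    by (intro mult_left_mono exp_w2 assms) auto
  also have "\<dots> = 2 / ((2::real)^k)^2" by (simp add: power2_eq_square)
  finally show "expectation (\<lambda>\<omega>. indicator {(2::real)^k} (X i \<omega>) * (wf k (X j \<omega>) * wf k (X j \<omega>))) \<le> 2 / ((2::real)^k)^2" .
qed

lemma Xmax_meas: "Xmax X n \<in> borel_measurable M"
  unfolding Xmax_def by (rule borel_measurable_Max) (auto intro: rv)

lemma S_meas: "S X n \<in> borel_measurable M"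
  unfolding S_def by (rule borel_measurable_sum) (auto intro: rv)

lemma lowB:
  assumes n: "n \<ge> 1" and k: "k \<ge> 1" and small2: "4 * real n / 2^k \<le> 1"
  shows "prob {\<omega>\<in>space M. Xmax X n \<omega> = 2^k} \<ge> real n / (2 * 2^k)"
proof -
  define N where "N = {1..n}"
  define m where "m = (2::real)^k"
  have m2: "m \<ge> 2" unfolding m_def using k
    by (metis one_le_numeral power_increasing power_one_right)
  define g where "g i t = (if t = i then indicator {m} else indicator {..<m} :: real \<Rightarrow> real)" for i t :: nat
  define G where "G i \<omega> = (\<Prod>t\<in>N. g i t (X t \<omega>))" for i \<omega>
  have finN: "finite N" "N \<subseteq> {1..}" unfolding N_def by auto
  have gm: "\<And>t. t \<in> N \<Longrightarrow> g i t \<in> borel_measurable borel" for i by (auto simp: g_def)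
  have gb: "\<And>t x. t \<in> N \<Longrightarrow> \<bar>g i t x\<bar> \<le> 1" for i by (auto simp: g_def indicator_def)
  have Gint: "integrable M (G i)" for i unfolding G_def by (rule prod_int(2)[OF finN gm gb])
  note [measurable] = Xmax_meas
  have Bset: "{\<omega>\<in>space M. Xmax X n \<omega> = 2^k} \<in> sets M" by measurable
  have pt: "(\<Sum>i\<in>N. G i \<omega>) \<le> indicator {\<omega>\<in>space M. Xmax X n \<omega> = 2^k} \<omega>" if \<omega>: "\<omega> \<in> space M" for \<omega>
  proof (cases "\<exists>i\<in>N. X i \<omega> = m \<and> (\<forall>t\<in>N-{i}. X t \<omega> < m)")
    case True
    then obtain i where i: "i \<in> N" "X i \<omega> = m" "\<forall>t\<in>N-{i}. X t \<omega> < m" by auto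
    have "Xmax X n \<omega> = m" unfolding Xmax_def
    proof (rule Max_eqI)
      show "finite ((\<lambda>i. X i \<omega>) ` {1..n})" by simp
      show "y \<le> m" if "y \<in> (\<lambda>i. X i \<omega>) ` {1..n}" for y
      proof -
        from that obtain j where j: "j \<in> {1..n}" "y = X j \<omega>" by auto
        show ?thesis using i j unfolding N_def by (cases "j = i") (auto intro: less_imp_le)
      qed
      show "m \<in> (\<lambda>i. X i \<omega>) ` {1..n}" using i unfolding N_def by force
    qed
    then have ind1: "indicator {\<omega>\<in>space M. Xmax X n \<omega> = 2^k} \<omega> = (1::real)" using \<omega> by (simp add: m_def)
    have Gi: "G i \<omega> = 1" unfolding G_def
      by (rule prod.neutral) (use i in \<open>auto simp: g_def\<close>)
    have Go: "G i' \<omega> = 0" if "i' \<in> N" "i' \<noteq> i" for i'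
      unfolding G_def using finN(1) i that
      by (subst prod_zero_iff) (auto intro!: bexI[of _ i] simp: g_def)
    have "(\<Sum>i\<in>N. G i \<omega>) = G i \<omega> + (\<Sum>i'\<in>N-{i}. G i' \<omega>)" using finN(1) i(1) by (rule sum.remove)
    also have "(\<Sum>i'\<in>N-{i}. G i' \<omega>) = 0" by (rule sum.neutral) (auto intro: Go)
    finally show ?thesis using Gi ind1 by simp
  next
    case False
    have "G i \<omega> = 0" if "i \<in> N" for i
    proof -
      from False that have "X i \<omega> \<noteq> m \<or> (\<exists>t\<in>N-{i}. \<not> X t \<omega> < m)" by auto
      then show ?thesis unfolding G_def using finN(1) that
        by (subst prod_zero_iff) (auto simp: g_def)
    qed
    then have "(\<Sum>i\<in>N. G i \<omega>) = 0" by simp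
    then show ?thesis by simp
  qed
  have EG: "expectation (G i) \<ge> 1 / (2 * m)" if i: "i \<in> N" for i
  proof -
    define P where "P = (\<Prod>t\<in>N-{i}. expectation (\<lambda>\<omega>. g i t (X t \<omega>)))"
    have "expectation (G i) = (\<Prod>t\<in>N. expectation (\<lambda>\<omega>. g i t (X t \<omega>)))"
      unfolding G_def by (rule prod_int(1)[OF finN gm gb])
    also have "\<dots> = expectation (\<lambda>\<omega>. g i i (X i \<omega>)) * P"
      unfolding P_def using finN(1) i by (rule prod.remove)
    also have "expectation (\<lambda>\<omega>. g i i (X i \<omega>)) = 1 / m"
      using i k unfolding g_def m_def N_def by (simp add: prob_eq)
    finally have e1: "expectation (G i) = 1 / m * P" .
    have e2: "(\<Prod>t\<in>N-{i}. 1 - 2 / m) \<le> P" unfolding P_def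
    proof (rule prod_mono)
      fix t assume t: "t \<in> N - {i}"
      then have "expectation (\<lambda>\<omega>. g i t (X t \<omega>)) = expectation (\<lambda>\<omega>. indicator {..<(2::real)^k} (X t \<omega>) :: real)"
        by (simp add: g_def m_def)
      moreover have "expectation (\<lambda>\<omega>. indicator {..<(2::real)^k} (X t \<omega>) :: real) \<ge> 1 - 2 / (2::real)^k"
        using t k unfolding N_def by (intro prob_less) auto
      ultimately show "0 \<le> 1 - 2 / m \<and> 1 - 2 / m \<le> expectation (\<lambda>\<omega>. g i t (X t \<omega>))"
        using m2 by (simp add: m_def)
    qed
    have e3: "(\<Prod>t\<in>N-{i}. 1 - 2 / m) = (1 - 2/m) ^ (n - 1)"
      using i unfolding N_def by simp
    have e4: "(1 - 2/m) ^ (n - 1) \<ge> 1 + real (n - 1) * (- 2 / m)"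
      using Bernoulli_inequality[of "- 2 / m" "n - 1"] m2 by simp
    have e5: "1 + real (n - 1) * (- 2 / m) \<ge> 1/2"
    proof -
      have "real (n - 1) \<le> real n" by simp
      then have "real (n - 1) * (2 / m) \<le> real n * (2 / m)" using m2 by (intro mult_right_mono) auto
      moreover have "real n * (2 / m) \<le> 1/2" using small2 m2 unfolding m_def by (simp add: field_simps)
      ultimately show ?thesis by simp
    qed
    have "P \<ge> 1/2" using e2 e3 e4 e5 by linarith
    then have "1 / m * (1/2) \<le> 1 / m * P" using m2 by (intro mult_left_mono) auto
    then show ?thesis using e1 by simp
  qed
  have "real n / (2 * 2^k) = (\<Sum>i\<in>N. 1 / (2 * m))" unfolding N_def m_def by simp
  also have "\<dots> \<le> (\<Sum>i\<in>N. expectation (G i))" by (intro sum_mono EG)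
  also have "\<dots> = expectation (\<lambda>\<omega>. \<Sum>i\<in>N. G i \<omega>)"
    by (rule Bochner_Integration.integral_sum[symmetric]) (auto intro: Gint)
  also have "\<dots> \<le> expectation (indicator {\<omega>\<in>space M. Xmax X n \<omega> = 2^k})"
    by (intro integral_mono_AE Bochner_Integration.integrable_sum Gint)
       (auto intro!: pt simp: Bset integrable_indicator_iff Int_absorb2 AE_space less_top[symmetric])
  also have "\<dots> = prob {\<omega>\<in>space M. Xmax X n \<omega> = 2^k}" by (simp add: Int_absorb2)
  finally show ?thesis .
qed

lemma pointAB:
  assumes n: "n \<ge> 1" and \<epsilon>: "\<epsilon> > 0" and small1: "real k / 2^k \<le> \<epsilon>/2"
    and pos: "\<forall>j\<in>{1..n}. X j \<omega> > 0"
    and A: "\<bar>S X n \<omega> / Xmax X n \<omega> - real n * real k / 2^k - 1\<bar> > \<epsilon>"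
    and B: "Xmax X n \<omega> = 2^k"
  shows "1 \<le> 4 / \<epsilon>^2 * (\<Sum>i\<in>{1..n}. indicator {(2::real)^k} (X i \<omega>) * (\<Sum>j\<in>{1..n}-{i}. wf k (X j \<omega>))^2)"
proof -
  define N where "N = {1..n::nat}"
  define m where "m = (2::real)^k"
  have m1: "m \<ge> 1" unfolding m_def by simp
  have fin: "finite ((\<lambda>i. X i \<omega>) ` N)" "(\<lambda>i. X i \<omega>) ` N \<noteq> {}" unfolding N_def using n by auto
  have "Xmax X n \<omega> \<in> (\<lambda>i. X i \<omega>) ` N" unfolding Xmax_def N_def using fin unfolding N_def by (rule Max_in)
  then obtain i where i: "i \<in> N" "X i \<omega> = m" using B unfolding m_def by auto
  have le: "X j \<omega> \<le> m" if "j \<in> N" for j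
  proof -
    have "X j \<omega> \<le> Xmax X n \<omega>" unfolding Xmax_def using fin(1) that unfolding N_def by (intro Max_ge) auto
    then show ?thesis using B by (simp add: m_def)
  qed
  define J where "J = N - {i}"
  have finJ: "finite J" unfolding J_def N_def by simp
  have cardJ: "card J = n - 1" unfolding J_def N_def using i(1) unfolding N_def by simp
  have wfX: "wf k (X j \<omega>) = (X j \<omega> - real k) / m" if "j \<in> J" for j
    using that le pos unfolding J_def N_def wf_def m_def by (auto simp: indicator_def)
  define T where "T = (\<Sum>j\<in>J. wf k (X j \<omega>))"
  have T: "T = ((\<Sum>j\<in>J. X j \<omega>) - real (n - 1) * real k) / m"
    unfolding T_def using wfX cardJ by (simp add: sum_divide_distrib[symmetric] sum_subtractf)
  have Ssplit: "S X n \<omega> = m + (\<Sum>j\<in>J. X j \<omega>)"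
    unfolding S_def J_def using i sum.remove[of N i "\<lambda>j. X j \<omega>"] unfolding N_def by simp
  have "S X n \<omega> / Xmax X n \<omega> - real n * real k / 2^k - 1 = T - real k / m"
    using n m1 unfolding Ssplit T B m_def[symmetric] by (simp add: field_simps of_nat_diff)
  then have "\<bar>T - real k / m\<bar> > \<epsilon>" using A by simp
  moreover have "0 \<le> real k / m" using m1 by simp
  ultimately have "\<bar>T\<bar> > \<epsilon> / 2" using small1 unfolding m_def by (intro abs_aux)
  then have "(\<epsilon>/2)^2 \<le> \<bar>T\<bar>^2" using \<epsilon> by (intro power_mono) auto
  then have T2: "\<epsilon>^2 / 4 \<le> T^2" by (simp add: power_divide)
  have h1: "1 \<le> 4 / \<epsilon>^2 * T^2"
  proof -
    have "4 / \<epsilon>^2 * (\<epsilon>^2 / 4) \<le> 4 / \<epsilon>^2 * T^2" using T2 \<epsilon> by (intro mult_left_mono) auto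
    then show ?thesis using \<epsilon> by simp
  qed
  have "T^2 = indicator {(2::real)^k} (X i \<omega>) * (\<Sum>j\<in>{1..n}-{i}. wf k (X j \<omega>))^2"
    using i unfolding T_def J_def N_def m_def by simp
  also have "\<dots> \<le> (\<Sum>i\<in>{1..n}. indicator {(2::real)^k} (X i \<omega>) * (\<Sum>j\<in>{1..n}-{i}. wf k (X j \<omega>))^2)"
    using i unfolding N_def by (intro member_le_sum) auto
  finally have h2: "T^2 \<le> (\<Sum>i\<in>{1..n}. indicator {(2::real)^k} (X i \<omega>) * (\<Sum>j\<in>{1..n}-{i}. wf k (X j \<omega>))^2)" .
  have "4 / \<epsilon>^2 * T^2 \<le> 4 / \<epsilon>^2 * (\<Sum>i\<in>{1..n}. indicator {(2::real)^k} (X i \<omega>) * (\<Sum>j\<in>{1..n}-{i}. wf k (X j \<omega>))^2)"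
    using h2 by (intro mult_left_mono) auto
  then show ?thesis using h1 by linarith
qed

lemma upAB:
  assumes n: "n \<ge> 1" and k: "k \<ge> 1" and \<epsilon>: "\<epsilon> > 0" and small1: "real k / 2^k \<le> \<epsilon>/2"
  shows "prob {\<omega>\<in>space M. \<bar>S X n \<omega> / Xmax X n \<omega> - real n * real k / 2^k - 1\<bar> > \<epsilon> \<and> Xmax X n \<omega> = 2^k}
     \<le> 4 / \<epsilon>^2 * (real n * (real n * (2 / ((2::real)^k)^2)))"
proof -
  define N where "N = {1..n::nat}"
  define H where "H i \<omega> = indicator {(2::real)^k} (X i \<omega>) * (\<Sum>j\<in>N-{i}. wf k (X j \<omega>))^2" for i \<omega>
  define tm where "tm i j l \<omega> = indicator {(2::real)^k} (X i \<omega>) * (wf k (X j \<omega>) * wf k (X l \<omega>))" for i j l \<omega>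
  have finN: "finite N" unfolding N_def by simp
  have Hexp: "H i \<omega> = (\<Sum>j\<in>N-{i}. \<Sum>l\<in>N-{i}. tm i j l \<omega>)" for i \<omega>
    unfolding H_def tm_def power2_eq_square sum_product by (simp add: sum_distrib_left)
  have tmint: "integrable M (tm i j l)" and tmexp: "expectation (tm i j l) \<le> (if j = l then 2 / ((2::real)^k)^2 else 0)"
    if "i \<in> N" "j \<in> N - {i}" "l \<in> N - {i}" for i j l
  proof -
    have "i \<ge> 1" "j \<ge> 1" "l \<ge> 1" "i \<noteq> j" "i \<noteq> l" using that unfolding N_def by auto
    then show "integrable M (tm i j l)" "expectation (tm i j l) \<le> (if j = l then 2 / ((2::real)^k)^2 else 0)"
      unfolding tm_def using trip[of i j l k] doub[of i j k] k
      by (cases "j = l"; simp add: fun_eq_iff)+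
  qed
  have Hint: "integrable M (H i)" if "i \<in> N" for i
    unfolding Hexp[abs_def] using that by (intro Bochner_Integration.integrable_sum tmint) auto
  have EH: "expectation (H i) \<le> real n * (2 / ((2::real)^k)^2)" if i: "i \<in> N" for i
  proof -
    have "expectation (H i) = (\<Sum>j\<in>N-{i}. \<Sum>l\<in>N-{i}. expectation (tm i j l))"
      unfolding Hexp[abs_def] using i
      by (subst Bochner_Integration.integral_sum, fastforce intro: Bochner_Integration.integrable_sum tmint)
         (intro sum.cong refl Bochner_Integration.integral_sum, auto intro: tmint)
    also have "\<dots> \<le> (\<Sum>j\<in>N-{i}. \<Sum>l\<in>N-{i}. if j = l then 2 / ((2::real)^k)^2 else 0)"
      using i by (intro sum_mono tmexp) auto
    also have "\<dots> = (\<Sum>j\<in>N-{i}. 2 / ((2::real)^k)^2)" using finN by simp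
    also have "\<dots> \<le> (\<Sum>j\<in>N. 2 / ((2::real)^k)^2)" using finN by (intro sum_mono2) auto
    also have "\<dots> = real n * (2 / ((2::real)^k)^2)" unfolding N_def by simp
    finally show ?thesis .
  qed
  note [measurable] = Xmax_meas S_meas
  define AB where "AB = {\<omega>\<in>space M. \<bar>S X n \<omega> / Xmax X n \<omega> - real n * real k / 2^k - 1\<bar> > \<epsilon> \<and> Xmax X n \<omega> = 2^k}"
  have ABs: "AB \<in> sets M" unfolding AB_def by measurable
  have AEpos: "AE \<omega> in M. \<forall>j\<in>N. X j \<omega> > 0"
  proof (rule AE_finite_allI[OF finN])
    fix j assume "j \<in> N"
    then have "j \<ge> 1" unfolding N_def by simp
    from AE_pow[OF this] show "AE \<omega> in M. X j \<omega> > 0" by eventually_elim auto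
  qed
  have pt: "AE \<omega> in M. indicator AB \<omega> \<le> 4 / \<epsilon>^2 * (\<Sum>i\<in>N. H i \<omega>)"
    using AEpos
  proof eventually_elim
    case (elim \<omega>)
    have nn: "0 \<le> 4 / \<epsilon>^2 * (\<Sum>i\<in>N. H i \<omega>)" unfolding H_def by (intro mult_nonneg_nonneg sum_nonneg) auto
    show ?case
    proof (cases "\<omega> \<in> AB")
      case True
      then have "1 \<le> 4 / \<epsilon>^2 * (\<Sum>i\<in>N. H i \<omega>)"
        unfolding H_def N_def using pointAB[OF n \<epsilon> small1, of \<omega>] elim unfolding AB_def N_def by auto
      then show ?thesis using True by simp
    next
      case False then show ?thesis using nn by simp
    qed
  qed
  have "prob AB = expectation (indicator AB)" using ABs by (simp add: Int_absorb2)
  also have "\<dots> \<le> expectation (\<lambda>\<omega>. 4 / \<epsilon>^2 * (\<Sum>i\<in>N. H i \<omega>))"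
    using pt ABs
    by (intro integral_mono_AE Bochner_Integration.integrable_mult_right Bochner_Integration.integrable_sum Hint)
       (auto simp: integrable_indicator_iff Int_absorb2 less_top[symmetric])
  also have "\<dots> = 4 / \<epsilon>^2 * (\<Sum>i\<in>N. expectation (H i))"
    by (subst Bochner_Integration.integral_sum[symmetric]) (auto intro: Hint)
  also have "\<dots> \<le> 4 / \<epsilon>^2 * (\<Sum>i\<in>N. real n * (2 / ((2::real)^k)^2))"
    by (intro mult_left_mono sum_mono EH) auto
  also have "\<dots> = 4 / \<epsilon>^2 * (real n * (real n * (2 / ((2::real)^k)^2)))" unfolding N_def by simp
  finally show ?thesis unfolding AB_def .
qed

lemma key:
  assumes n: "n \<ge> 1" and k: "k \<ge> 1" and \<epsilon>: "\<epsilon> > 0" and small1: "real k / 2^k \<le> \<epsilon>/2"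
    and small2: "4 * real n / 2^k \<le> 1"
  shows "cond_prob M (\<lambda>\<omega>. \<bar>S X n \<omega> / Xmax X n \<omega> - real n * real k / 2 ^ k - 1\<bar> > \<epsilon>)
            (\<lambda>\<omega>. Xmax X n \<omega> = 2 ^ k) \<le> 16 / \<epsilon>^2 * (real n / 2^k)"
proof -
  define m where "m = (2::real)^k"
  have m1: "m \<ge> 1" unfolding m_def by simp
  define a where "a = prob {\<omega>\<in>space M. \<bar>S X n \<omega> / Xmax X n \<omega> - real n * real k / 2^k - 1\<bar> > \<epsilon> \<and> Xmax X n \<omega> = 2^k}"
  define b where "b = prob {\<omega>\<in>space M. Xmax X n \<omega> = 2^k}"
  have a: "a \<le> 4 / \<epsilon>^2 * (real n * (real n * (2 / m^2)))" unfolding a_def m_def by (rule upAB[OF n k \<epsilon> small1])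
  have b: "b \<ge> real n / (2 * m)" unfolding b_def m_def by (rule lowB[OF n k small2])
  have bpos: "real n / (2 * m) > 0" using n m1 by simp
  have "cond_prob M (\<lambda>\<omega>. \<bar>S X n \<omega> / Xmax X n \<omega> - real n * real k / 2 ^ k - 1\<bar> > \<epsilon>)
            (\<lambda>\<omega>. Xmax X n \<omega> = 2 ^ k) = a / b" unfolding cond_prob_def a_def b_def by simp
  also have "\<dots> \<le> (4 / \<epsilon>^2 * (real n * (real n * (2 / m^2)))) / (real n / (2 * m))"
    using a b bpos by (intro frac_le) (auto simp: a_def)
  also have "\<dots> = 16 / \<epsilon>^2 * (real n / 2^k)" using n m1 unfolding m_def by (simp add: field_simps power2_eq_square)
  finally show ?thesis .
qed

end

lemma lim_k_div: "((\<lambda>x::nat. real x / 2^x) \<longlongrightarrow> 0) at_top"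
  by real_asymp

theorem proposition3:
  fixes M :: "'a measure" and X :: "nat \<Rightarrow> 'a \<Rightarrow> real" and k :: "nat \<Rightarrow> nat"
  assumes "prob_space M"
    and rv: "\<And>i. i \<ge> 1 \<Longrightarrow> X i \<in> borel_measurable M"
    and indep: "prob_space.indep_vars M (\<lambda>_. borel) X {1..}"
    and distr: "\<And>i j. i \<ge> 1 \<Longrightarrow> j \<ge> 1 \<Longrightarrow>
                  measure M {\<omega> \<in> space M. X i \<omega> = 2 ^ j} = 1 / 2 ^ j"
    and kpos: "\<And>n. n \<ge> 1 \<Longrightarrow> k n \<ge> 1"
    and kgrowth: "filterlim (\<lambda>n. 2 ^ k n / real n) at_top sequentially"
  shows "\<forall>\<epsilon>>0. (\<lambda>n. cond_prob M
            (\<lambda>\<omega>. \<bar>S X n \<omega> / Xmax X n \<omega> - real n * real (k n) / 2 ^ k n - 1\<bar> > \<epsilon>)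
            (\<lambda>\<omega>. Xmax X n \<omega> = 2 ^ k n))
         \<longlonglongrightarrow> 0"
proof (intro allI impI)
  fix \<epsilon> :: real assume \<epsilon>: "\<epsilon> > 0"
  interpret P3 M X
    using assms(1) rv indep distr by (intro P3.intro P3_axioms.intro) auto
  have L1: "(\<lambda>n. real n / 2 ^ k n) \<longlonglongrightarrow> 0"
  proof -
    have "(\<lambda>n. inverse (2 ^ k n / real n)) \<longlonglongrightarrow> 0" by (rule tendsto_inverse_0_at_top[OF kgrowth])
    then show ?thesis by (simp add: inverse_divide)
  qed
  have kinf: "filterlim k at_top sequentially"
    unfolding filterlim_at_top
  proof
    fix N :: nat
    have "eventually (\<lambda>n. 2 ^ N \<le> 2 ^ k n / real n) sequentially"
      using kgrowth unfolding filterlim_at_top by auto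
    moreover have "eventually (\<lambda>n. n \<ge> 1) sequentially" by (rule eventually_ge_at_top)
    ultimately show "eventually (\<lambda>n. N \<le> k n) sequentially"
    proof eventually_elim
      case (elim n)
      then have "(2::real) ^ N * 1 \<le> 2 ^ k n / real n * real n"
        by (intro mult_mono) auto
      also have "\<dots> = 2 ^ k n" using elim by simp
      finally have "(2::real) ^ N \<le> 2 ^ k n" by simp
      then show ?case by simp
    qed
  qed
  have L2: "(\<lambda>n. real (k n) / 2 ^ k n) \<longlonglongrightarrow> 0"
    using filterlim_compose[OF lim_k_div kinf] by (simp add: o_def)
  have ev1: "eventually (\<lambda>n. real (k n) / 2 ^ k n < \<epsilon>/2) sequentially"
    using order_tendstoD(2)[OF L2, of "\<epsilon>/2"] \<epsilon> by (simp only: half_gt_zero)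
  have ev2: "eventually (\<lambda>n. real n / 2 ^ k n < 1/4) sequentially"
    by (rule order_tendstoD(2)[OF L1]) simp
  have ev3: "eventually (\<lambda>n. n \<ge> 1) sequentially" by (rule eventually_ge_at_top)
  have upper: "eventually (\<lambda>n. cond_prob M
            (\<lambda>\<omega>. \<bar>S X n \<omega> / Xmax X n \<omega> - real n * real (k n) / 2 ^ k n - 1\<bar> > \<epsilon>)
            (\<lambda>\<omega>. Xmax X n \<omega> = 2 ^ k n) \<le> 16 / \<epsilon>^2 * (real n / 2^k n)) sequentially"
    using ev1 ev2 ev3
  proof eventually_elim
    case (elim n)
    have "4 * real n / 2 ^ k n \<le> 1" using elim(2) by simp
    then show ?case using key[OF elim(3) kpos[OF elim(3)] \<epsilon>] elim(1) by simp
  qed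
  have lower: "eventually (\<lambda>n. 0 \<le> cond_prob M
            (\<lambda>\<omega>. \<bar>S X n \<omega> / Xmax X n \<omega> - real n * real (k n) / 2 ^ k n - 1\<bar> > \<epsilon>)
            (\<lambda>\<omega>. Xmax X n \<omega> = 2 ^ k n)) sequentially"
    by (simp add: cond_prob_def)
  have lim: "(\<lambda>n. 16 / \<epsilon>^2 * (real n / 2^k n)) \<longlonglongrightarrow> 0"
    using tendsto_mult_right_zero[OF L1, of "16 / \<epsilon>^2"] by simp
  show "(\<lambda>n. cond_prob M
            (\<lambda>\<omega>. \<bar>S X n \<omega> / Xmax X n \<omega> - real n * real (k n) / 2 ^ k n - 1\<bar> > \<epsilon>)
            (\<lambda>\<omega>. Xmax X n \<omega> = 2 ^ k n)) \<longlonglongrightarrow> 0"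
    by (rule tendsto_sandwich[OF lower upper tendsto_const lim])
qed

end
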